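(* Let $S_1$ and $S_2$ be two finite collections of nonvertical line segments in the plane with $|S_1\cup S_2|=n$, such that no two segments of $S_1$ intersect (segments of $S_2$ may intersect each other). Then the number of intersection points between a segment of $S_1$ and a segment of $S_2$ that lie on an envelope (lower or upper) of $S_1$ and also on an envelope (lower or upper) of $S_2$ is $O(n)$.
   Context: For a finite collection $S$ of nonvertical segments (viewed as graphs of partial functions $\mathbb R\to\mathbb R$), the lower envelope is the pointwise minimum of these graphs (the parts visible from $y=-\infty$), and the upper envelope is the pointwise maximum (the parts visible from $y=+\infty$). *)

theory Defs
  imports "HOL-Analysis.Analysis"
begin

definition nonvertical_segment :: "(real \<times> real) set \<Rightarrow> bool" where
  "nonvertical_segment s \<longleftrightarrow> (\<exists>a b. fst a \<noteq> fst b \<and> s = closed_segment a b)"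

definition on_lower_envelope :: "(real \<times> real) set set \<Rightarrow> real \<times> real \<Rightarrow> bool" where
  "on_lower_envelope S p \<longleftrightarrow>
     (\<exists>s\<in>S. p \<in> s) \<and> (\<forall>s\<in>S. \<forall>q\<in>s. fst q = fst p \<longrightarrow> snd p \<le> snd q)"

definition on_upper_envelope :: "(real \<times> real) set set \<Rightarrow> real \<times> real \<Rightarrow> bool" where
  "on_upper_envelope S p \<longleftrightarrow>
     (\<exists>s\<in>S. p \<in> s) \<and> (\<forall>s\<in>S. \<forall>q\<in>s. fst q = fst p \<longrightarrow> snd q \<le> snd p)"

definition on_envelope :: "(real \<times> real) set set \<Rightarrow> real \<times> real \<Rightarrow> bool" where
  "on_envelope S p \<longleftrightarrow> on_lower_envelope S p \<or> on_upper_envelope S p"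

end

theory Submission
  imports Defs
begin

lemma seg_lin:
  fixes a b :: "real \<times> real"
  assumes "fst a \<noteq> fst b"
  shows "\<exists>\<alpha> \<beta>. (\<forall>z\<in>closed_segment a b. snd z = \<alpha> + \<beta> * fst z) \<and>
     (\<forall>x. min (fst a) (fst b) \<le> x \<and> x \<le> max (fst a) (fst b) \<longrightarrow> (x, \<alpha> + \<beta> * x) \<in> closed_segment a b)
     \<and> fst ` closed_segment a b = {min (fst a) (fst b) .. max (fst a) (fst b)}"
proof -
  define \<beta> where "\<beta> = (snd b - snd a) / (fst b - fst a)"
  define \<alpha> where "\<alpha> = snd a - \<beta> * fst a"
  have d: "fst b - fst a \<noteq> 0" using assms by simp
  have A: "\<forall>z\<in>closed_segment a b. snd z = \<alpha> + \<beta> * fst z"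
  proof
    fix z assume "z \<in> closed_segment a b"
    then obtain u where z: "z = (1 - u) *\<^sub>R a + u *\<^sub>R b" unfolding closed_segment_def by blast
    have s0: "snd z = (1-u) * snd a + u * snd b" and f0: "fst z = (1-u) * fst a + u * fst b" using z by auto
    have s: "snd z = snd a + u * (snd b - snd a)" using s0 by (simp add: algebra_simps)
    have f: "fst z - fst a = u * (fst b - fst a)" using f0 by (simp add: algebra_simps)
    have "\<alpha> + \<beta> * fst z = snd a + \<beta> * (fst z - fst a)" unfolding \<alpha>_def by (simp add: algebra_simps)
    also have "\<dots> = snd a + u * (snd b - snd a)" unfolding f \<beta>_def using d by simp
    finally show "snd z = \<alpha> + \<beta> * fst z" using s by simp
  qed
  have lf: "linear (fst :: real \<times> real \<Rightarrow> real)" by (simp add: bounded_linear_fst bounded_linear.linear)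
  have F: "fst ` closed_segment a b = {min (fst a) (fst b) .. max (fst a) (fst b)}"
    using closed_segment_linear_image[OF lf, of a b] closed_segment_eq_real_ivl
    by (metis atLeastAtMost_iff max.absorb_iff2 max_def min_def)
  have B: "\<forall>x. min (fst a) (fst b) \<le> x \<and> x \<le> max (fst a) (fst b) \<longrightarrow> (x, \<alpha> + \<beta> * x) \<in> closed_segment a b"
  proof (intro allI impI)
    fix x assume "min (fst a) (fst b) \<le> x \<and> x \<le> max (fst a) (fst b)"
    then have "x \<in> fst ` closed_segment a b" using F by auto
    then obtain z where z: "z \<in> closed_segment a b" "x = fst z" by auto
    then have "z = (x, \<alpha> + \<beta> * x)" using A by (metis prod.collapse)
    then show "(x, \<alpha> + \<beta> * x) \<in> closed_segment a b" using z by simp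
  qed
  show ?thesis using A B F by blast
qed

lemma zero_between:
  fixes A B a c :: real
  assumes "(A + B*a) * (A + B*c) \<le> 0"
  shows "\<exists>x. min a c \<le> x \<and> x \<le> max a c \<and> A + B*x = 0"
proof (cases "B = 0")
  case True
  then have "A = 0" using assms by (auto simp: mult_le_0_iff)
  then show ?thesis using True by (intro exI[of _ a]) simp
next
  case False
  define x where "x = - A / B"
  have "(A + B*a) * (A + B*c) = B^2 * ((a - x) * (c - x))" using False unfolding x_def
    by (simp add: field_simps power2_eq_square)
  then have "(a - x) * (c - x) \<le> 0" using assms False
    by (metis mult_le_0_iff not_less not_square_less_zero order_antisym_conv zero_less_power2)
  then have "min a c \<le> x \<and> x \<le> max a c" by (auto simp: mult_le_0_iff)
  moreover have "A + B*x = 0" using False unfolding x_def by simp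
  ultimately show ?thesis by blast
qed

lemma few:
  fixes F :: "real set"
  assumes "finite F" "\<And>a b c. a\<in>F \<Longrightarrow> b\<in>F \<Longrightarrow> c\<in>F \<Longrightarrow> a<b \<Longrightarrow> b<c \<Longrightarrow> False"
  shows "card F \<le> 2"
proof (cases "F = {}")
  case True then show ?thesis by simp
next
  case False
  have "F \<subseteq> {Min F, Max F}"
  proof
    fix y assume y: "y \<in> F"
    have "Min F \<le> y" "y \<le> Max F" using y assms(1) by auto
    moreover have "Min F \<in> F" "Max F \<in> F" using False assms(1) by auto
    ultimately show "y \<in> {Min F, Max F}" using assms(2)[of "Min F" y "Max F"] y by force
  qed
  then have "card F \<le> card {Min F, Max F}" by (simp add: card_mono)
  also have "\<dots> \<le> 2" by (simp add: card_insert_le_m1)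
  finally show ?thesis .
qed

lemma count_lemma:
  fixes A X :: "real set"
  assumes fA: "finite A" and fX: "finite X" and dis: "A \<inter> X = {}"
    and no3: "\<And>a b c. a\<in>A \<Longrightarrow> b\<in>A \<Longrightarrow> c\<in>A \<Longrightarrow> a<b \<Longrightarrow> b<c \<Longrightarrow> (\<forall>x\<in>X. \<not>(a \<le> x \<and> x \<le> c)) \<Longrightarrow> False"
  shows "card A \<le> 2 * (card X + 1)"
proof -
  define cnt where "cnt a = card {x\<in>X. x < a}" for a
  have cle: "cnt a \<le> card X" for a unfolding cnt_def using fX by (intro card_mono) auto
  have AU: "A = (\<Union>k\<in>{0..card X}. {a\<in>A. cnt a = k})" using cle by auto
  have fib: "card {a\<in>A. cnt a = k} \<le> 2" for k
  proof (rule few)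
    show "finite {a\<in>A. cnt a = k}" using fA by simp
    fix a b c assume a: "a \<in> {a\<in>A. cnt a = k}" and b: "b \<in> {a\<in>A. cnt a = k}" and c: "c \<in> {a\<in>A. cnt a = k}"
      and ab: "a < b" and bc: "b < c"
    show False
    proof (rule no3[of a b c])
      show "a\<in>A" "b\<in>A" "c\<in>A" using a b c by auto
      show "a<b" "b<c" by fact+
      show "\<forall>x\<in>X. \<not>(a \<le> x \<and> x \<le> c)"
      proof (intro ballI notI)
        fix x assume x: "x \<in> X" "a \<le> x \<and> x \<le> c"
        have "x \<noteq> a" "x \<noteq> c" using x dis a c by auto
        have "x \<in> {y\<in>X. y < c}" "x \<notin> {y\<in>X. y < a}" using x \<open>x \<noteq> a\<close> \<open>x \<noteq> c\<close> by auto
        moreover have "{y\<in>X. y < a} \<subseteq> {y\<in>X. y < c}" using ab bc by auto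
        ultimately have "{y\<in>X. y < a} \<subset> {y\<in>X. y < c}" by blast
        then have "cnt a < cnt c" unfolding cnt_def using fX by (intro psubset_card_mono) auto
        then show False using a c by simp
      qed
    qed
  qed
  have "card A \<le> (\<Sum>k\<in>{0..card X}. card {a\<in>A. cnt a = k})"
    by (subst AU) (rule card_UN_le, simp)
  also have "\<dots> \<le> (\<Sum>k\<in>{0..card X}. 2)" by (rule sum_mono) (rule fib)
  also have "\<dots> = 2 * (card X + 1)" by simp
  finally show ?thesis .
qed


definition sgenv :: "real \<Rightarrow> (real \<times> real) set set \<Rightarrow> real \<times> real \<Rightarrow> bool" where
  "sgenv \<sigma> S p \<longleftrightarrow> (\<exists>s\<in>S. p \<in> s) \<and> (\<forall>s\<in>S. \<forall>z\<in>s. fst z = fst p \<longrightarrow> 0 \<le> \<sigma> * (snd z - snd p))"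

lemma lower_sgenv: "on_lower_envelope S p \<Longrightarrow> sgenv 1 S p"
  unfolding on_lower_envelope_def sgenv_def by auto

lemma upper_sgenv: "on_upper_envelope S p \<Longrightarrow> sgenv (-1) S p"
  unfolding on_upper_envelope_def sgenv_def by auto

lemma span:
  assumes nv: "nonvertical_segment s" and sX: "Inf (fst ` s) \<in> X" "Sup (fst ` s) \<in> X"
    and noX: "\<forall>x\<in>X. \<not>(lo \<le> x \<and> x \<le> hi)" and z: "z \<in> s" "lo \<le> fst z" "fst z \<le> hi"
  shows "\<exists>\<alpha> \<beta>. (\<forall>z\<in>s. snd z = \<alpha> + \<beta> * fst z) \<and> (\<forall>x. lo \<le> x \<longrightarrow> x \<le> hi \<longrightarrow> (x, \<alpha> + \<beta> * x) \<in> s)"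
proof -
  obtain a b where ab: "fst a \<noteq> fst b" "s = closed_segment a b" using nv unfolding nonvertical_segment_def by blast
  obtain \<alpha> \<beta> where A: "\<forall>z\<in>s. snd z = \<alpha> + \<beta> * fst z"
    and B: "\<forall>x. min (fst a) (fst b) \<le> x \<and> x \<le> max (fst a) (fst b) \<longrightarrow> (x, \<alpha> + \<beta> * x) \<in> s"
    and F: "fst ` s = {min (fst a) (fst b) .. max (fst a) (fst b)}"
    using seg_lin[OF ab(1)] ab(2) by blast
  have le: "min (fst a) (fst b) \<le> max (fst a) (fst b)" by simp
  have mX: "min (fst a) (fst b) \<in> X" using sX(1) F le by simp
  have MX: "max (fst a) (fst b) \<in> X" using sX(2) F le by simp
  have zz: "min (fst a) (fst b) \<le> fst z" "fst z \<le> max (fst a) (fst b)" using z(1) F by auto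
  have "min (fst a) (fst b) < lo" using noX mX zz z by force
  moreover have "hi < max (fst a) (fst b)" using noX MX zz z by force
  ultimately show ?thesis using A B by (intro exI[of _ \<alpha>] exI[of _ \<beta>]) auto
qed

lemma key:
  fixes S1 S2 :: "(real \<times> real) set set"
  assumes disj: "\<forall>s\<in>S1. \<forall>t\<in>S1. s \<noteq> t \<longrightarrow> s \<inter> t = {}"
    and nv: "\<forall>s\<in>S1 \<union> S2. nonvertical_segment s"
    and XX: "\<forall>s\<in>S1 \<union> S2. Inf (fst ` s) \<in> X \<and> Sup (fst ` s) \<in> X"
    and noX: "\<forall>x\<in>X. \<not>(fst p \<le> x \<and> x \<le> fst r)"
    and pq: "fst p < fst q" and qr: "fst q < fst r"
    and s1: "s1 \<in> S1" and s2: "s2 \<in> S2" and q12: "s1 \<inter> s2 = {q}"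
    and sg1: "\<sigma>1 \<noteq> 0" and sg2: "\<sigma>2 \<noteq> 0"
    and e1p: "sgenv \<sigma>1 S1 p" and e1q: "sgenv \<sigma>1 S1 q" and e1r: "sgenv \<sigma>1 S1 r"
    and e2p: "sgenv \<sigma>2 S2 p" and e2r: "sgenv \<sigma>2 S2 r"
  shows False
proof -
  define lo where "lo = fst p"
  define hi where "hi = fst r"
  have noX': "\<forall>x\<in>X. \<not>(lo \<le> x \<and> x \<le> hi)" using noX unfolding lo_def hi_def .
  have qin: "q \<in> s1" "q \<in> s2" using q12 by auto
  have spanS: "\<exists>\<alpha> \<beta>. (\<forall>z\<in>s. snd z = \<alpha> + \<beta> * fst z) \<and> (\<forall>x. lo \<le> x \<longrightarrow> x \<le> hi \<longrightarrow> (x, \<alpha> + \<beta> * x) \<in> s)"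
    if "s \<in> S1 \<union> S2" "z \<in> s" "lo \<le> fst z" "fst z \<le> hi" for s z
    using span[of s X lo hi z] that nv XX noX' by blast
  obtain \<alpha>1 \<beta>1 where A1: "\<forall>z\<in>s1. snd z = \<alpha>1 + \<beta>1 * fst z"
    and B1: "\<forall>x. lo \<le> x \<longrightarrow> x \<le> hi \<longrightarrow> (x, \<alpha>1 + \<beta>1 * x) \<in> s1"
    using spanS[of s1 q] s1 qin pq qr unfolding lo_def hi_def by auto
  obtain \<alpha>2 \<beta>2 where A2: "\<forall>z\<in>s2. snd z = \<alpha>2 + \<beta>2 * fst z"
    and B2: "\<forall>x. lo \<le> x \<longrightarrow> x \<le> hi \<longrightarrow> (x, \<alpha>2 + \<beta>2 * x) \<in> s2"
    using spanS[of s2 q] s2 qin pq qr unfolding lo_def hi_def by auto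
  have qy1: "snd q = \<alpha>1 + \<beta>1 * fst q" using A1 qin by blast
  have qy2: "snd q = \<alpha>2 + \<beta>2 * fst q" using A2 qin by blast
  have on1: "snd w = \<alpha>1 + \<beta>1 * fst w" if w: "sgenv \<sigma>1 S1 w" "lo \<le> fst w" "fst w \<le> hi" for w
  proof -
    obtain s' where s': "s' \<in> S1" "w \<in> s'" using w(1) unfolding sgenv_def by blast
    obtain \<alpha>' \<beta>' where A': "\<forall>z\<in>s'. snd z = \<alpha>' + \<beta>' * fst z"
      and B': "\<forall>x. lo \<le> x \<longrightarrow> x \<le> hi \<longrightarrow> (x, \<alpha>' + \<beta>' * x) \<in> s'"
      using spanS[of s' w] s' w by auto
    show ?thesis
    proof (cases "s' = s1")
      case True then show ?thesis using A1 s' by blast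
    next
      case False
      have wy: "snd w = \<alpha>' + \<beta>' * fst w" using A' s' by blast
      have i1: "0 \<le> \<sigma>1 * ((\<alpha>1 + \<beta>1 * fst w) - snd w)"
        using w(1) s1 B1 w unfolding sgenv_def by (metis fst_conv snd_conv)
      have "lo \<le> fst q" "fst q \<le> hi" using pq qr unfolding lo_def hi_def by auto
      then have i2: "0 \<le> \<sigma>1 * ((\<alpha>' + \<beta>' * fst q) - snd q)"
        using e1q s' B' unfolding sgenv_def by (metis fst_conv snd_conv)
      have "(\<sigma>1 * ((\<alpha>1 - \<alpha>') + (\<beta>1 - \<beta>') * fst w)) * (\<sigma>1 * ((\<alpha>1 - \<alpha>') + (\<beta>1 - \<beta>') * fst q)) \<le> 0"
      proof (rule mult_nonneg_nonpos)
        show "0 \<le> \<sigma>1 * ((\<alpha>1 - \<alpha>') + (\<beta>1 - \<beta>') * fst w)" using i1 wy by (simp add: algebra_simps)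
        show "\<sigma>1 * ((\<alpha>1 - \<alpha>') + (\<beta>1 - \<beta>') * fst q) \<le> 0" using i2 qy1 by (simp add: algebra_simps)
      qed
      then have "(\<sigma>1 * \<sigma>1) * (((\<alpha>1 - \<alpha>') + (\<beta>1 - \<beta>') * fst w) * ((\<alpha>1 - \<alpha>') + (\<beta>1 - \<beta>') * fst q)) \<le> 0"
        by (simp add: algebra_simps)
      moreover have "\<sigma>1 * \<sigma>1 > 0" using sg1 by (auto simp add: zero_less_mult_iff linorder_neq_iff)
      ultimately have "((\<alpha>1 - \<alpha>') + (\<beta>1 - \<beta>') * fst w) * ((\<alpha>1 - \<alpha>') + (\<beta>1 - \<beta>') * fst q) \<le> 0"
        by (metis mult_le_cancel_left_pos mult_zero_right)
      then obtain x where x: "min (fst w) (fst q) \<le> x" "x \<le> max (fst w) (fst q)" "(\<alpha>1 - \<alpha>') + (\<beta>1 - \<beta>') * x = 0"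
        using zero_between by blast
      have xr: "lo \<le> x" "x \<le> hi" using x(1,2) w pq qr unfolding lo_def hi_def by auto
      have "(x, \<alpha>1 + \<beta>1 * x) \<in> s1" using B1 xr by blast
      moreover have "(x, \<alpha>1 + \<beta>1 * x) \<in> s'"
      proof -
        have "\<alpha>1 + \<beta>1 * x = \<alpha>' + \<beta>' * x" using x(3) by (simp add: algebra_simps)
        then show ?thesis using B' xr by simp
      qed
      ultimately show ?thesis using disj s1 s' False by blast
    qed
  qed
  have py: "snd p = \<alpha>1 + \<beta>1 * fst p" using on1[OF e1p] pq qr unfolding lo_def hi_def by auto
  have ry: "snd r = \<alpha>1 + \<beta>1 * fst r" using on1[OF e1r] pq qr unfolding lo_def hi_def by auto
  have bne: "\<beta>1 \<noteq> \<beta>2"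
  proof
    assume eq: "\<beta>1 = \<beta>2"
    then have "\<alpha>1 = \<alpha>2" using qy1 qy2 by simp
    then have "(lo, \<alpha>1 + \<beta>1 * lo) \<in> s1 \<inter> s2" using B1 B2 eq pq qr unfolding lo_def hi_def by auto
    then show False using q12 pq unfolding lo_def by auto
  qed
  have j1: "0 \<le> \<sigma>2 * ((\<alpha>2 + \<beta>2 * fst p) - snd p)"
    using e2p s2 B2 pq qr unfolding sgenv_def lo_def hi_def by (metis fst_conv snd_conv order_refl less_imp_le order.strict_trans)
  have j2: "0 \<le> \<sigma>2 * ((\<alpha>2 + \<beta>2 * fst r) - snd r)"
    using e2r s2 B2 pq qr unfolding sgenv_def lo_def hi_def by (metis fst_conv snd_conv order_refl less_imp_le order.strict_trans)
  define k where "k = \<sigma>2 * (\<beta>2 - \<beta>1)"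
  have hp: "(\<alpha>2 + \<beta>2 * fst p) - snd p = (\<beta>2 - \<beta>1) * (fst p - fst q)" using py qy1 qy2 by (simp add: algebra_simps)
  have hr: "(\<alpha>2 + \<beta>2 * fst r) - snd r = (\<beta>2 - \<beta>1) * (fst r - fst q)" using ry qy1 qy2 by (simp add: algebra_simps)
  have k1: "0 \<le> k * (fst p - fst q)" using j1 hp unfolding k_def by (simp add: algebra_simps)
  have k2: "0 \<le> k * (fst r - fst q)" using j2 hr unfolding k_def by (simp add: algebra_simps)
  have "k \<le> 0" using k1 pq by (simp add: zero_le_mult_iff)
  moreover have "k \<ge> 0" using k2 qr by (simp add: zero_le_mult_iff)
  ultimately have "k = 0" by simp
  then show False using sg2 bne unfolding k_def by simp
qed


lemma sgenv_inj:
  assumes "sgenv \<sigma> S p" "sgenv \<sigma> S p'" "fst p = fst p'" "\<sigma> \<noteq> 0"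
  shows "p = p'"
proof -
  obtain s where s: "s \<in> S" "p \<in> s" using assms(1) unfolding sgenv_def by blast
  obtain s' where s': "s' \<in> S" "p' \<in> s'" using assms(2) unfolding sgenv_def by blast
  have "0 \<le> \<sigma> * (snd p' - snd p)" using assms(1,3) s' unfolding sgenv_def by auto
  moreover have "0 \<le> \<sigma> * (snd p - snd p')" using assms(2,3) s unfolding sgenv_def by auto
  ultimately have "\<sigma> * (snd p - snd p') = 0" by (auto simp: algebra_simps)
  then have "snd p = snd p'" using assms(4) by simp
  then show ?thesis using assms(3) by (simp add: prod_eq_iff)
qed

theorem lemma2:
  shows "\<exists>C::real. \<forall>S1 S2 :: (real \<times> real) set set.
     finite S1 \<and> finite S2 \<and>
     (\<forall>s\<in>S1 \<union> S2. nonvertical_segment s) \<and>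
     (\<forall>s\<in>S1. \<forall>t\<in>S1. s \<noteq> t \<longrightarrow> s \<inter> t = {}) \<longrightarrow>
     real (card {p. (\<exists>s1\<in>S1. \<exists>s2\<in>S2. s1 \<inter> s2 = {p})
                    \<and> on_envelope S1 p \<and> on_envelope S2 p})
       \<le> C * real (card (S1 \<union> S2))"
proof (intro exI[of _ 28] allI impI)
  fix S1 S2 :: "(real \<times> real) set set"
  assume H: "finite S1 \<and> finite S2 \<and> (\<forall>s\<in>S1 \<union> S2. nonvertical_segment s) \<and>
     (\<forall>s\<in>S1. \<forall>t\<in>S1. s \<noteq> t \<longrightarrow> s \<inter> t = {})"
  then have fS1: "finite S1" and fS2: "finite S2" and nv: "\<forall>s\<in>S1 \<union> S2. nonvertical_segment s"
    and disj: "\<forall>s\<in>S1. \<forall>t\<in>S1. s \<noteq> t \<longrightarrow> s \<inter> t = {}" by auto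
  define P where "P = {p. (\<exists>s1\<in>S1. \<exists>s2\<in>S2. s1 \<inter> s2 = {p}) \<and> on_envelope S1 p \<and> on_envelope S2 p}"
  define n where "n = card (S1 \<union> S2)"
  show "real (card {p. (\<exists>s1\<in>S1. \<exists>s2\<in>S2. s1 \<inter> s2 = {p}) \<and> on_envelope S1 p \<and> on_envelope S2 p})
       \<le> 28 * real (card (S1 \<union> S2))"
  proof (cases "finite P \<and> P \<noteq> {}")
    case False
    then have "card P = 0" by auto
    then show ?thesis unfolding P_def by simp
  next
    case True
    then have fP: "finite P" and neP: "P \<noteq> {}" by auto
    have fS: "finite (S1 \<union> S2)" using fS1 fS2 by simp
    have "S1 \<noteq> {}" using neP unfolding P_def by auto
    then have n1: "1 \<le> n" unfolding n_def using fS by (simp add: Suc_leI card_gt_0_iff)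
    define X where "X = (\<lambda>s. Inf (fst ` s)) ` (S1 \<union> S2) \<union> (\<lambda>s. Sup (fst ` s)) ` (S1 \<union> S2)"
    have fX: "finite X" unfolding X_def using fS by simp
    have cX: "card X \<le> 2 * n"
    proof -
      have "card X \<le> card ((\<lambda>s. Inf (fst ` s)) ` (S1 \<union> S2)) + card ((\<lambda>s. Sup (fst ` s)) ` (S1 \<union> S2))"
        unfolding X_def by (rule card_Un_le)
      also have "\<dots> \<le> n + n" unfolding n_def by (intro add_mono card_image_le fS)
      finally show ?thesis by simp
    qed
    have XX: "\<forall>s\<in>S1 \<union> S2. Inf (fst ` s) \<in> X \<and> Sup (fst ` s) \<in> X" unfolding X_def by auto
    define PE where "PE = {p\<in>P. fst p \<in> X}"
    define PO where "PO \<sigma>1 \<sigma>2 = {p\<in>P. fst p \<notin> X \<and> sgenv \<sigma>1 S1 p \<and> sgenv \<sigma>2 S2 p}" for \<sigma>1 \<sigma>2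
    have cPE: "card PE \<le> 2 * card X"
    proof -
      have "inj_on (\<lambda>p. (fst p, on_lower_envelope S1 p)) PE"
      proof (rule inj_onI)
        fix p p' assume p: "p \<in> PE" and p': "p' \<in> PE"
          and eq: "(fst p, on_lower_envelope S1 p) = (fst p', on_lower_envelope S1 p')"
        have e: "on_envelope S1 p" "on_envelope S1 p'" using p p' unfolding PE_def P_def by auto
        show "p = p'"
        proof (cases "on_lower_envelope S1 p")
          case True
          then have "sgenv 1 S1 p" "sgenv 1 S1 p'" using eq lower_sgenv by auto
          then show ?thesis using sgenv_inj eq by fastforce
        next
          case False
          then have "on_upper_envelope S1 p" "on_upper_envelope S1 p'" using eq e unfolding on_envelope_def by auto
          then have "sgenv (-1) S1 p" "sgenv (-1) S1 p'" using upper_sgenv by auto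
          then show ?thesis using sgenv_inj eq by fastforce
        qed
      qed
      moreover have "(\<lambda>p. (fst p, on_lower_envelope S1 p)) ` PE \<subseteq> X \<times> UNIV" unfolding PE_def by auto
      ultimately have "card PE \<le> card (X \<times> (UNIV :: bool set))"
        using fX by (intro card_inj_on_le) auto
      also have "\<dots> = 2 * card X" by (simp add: card_cartesian_product)
      finally show ?thesis .
    qed
    have cPO: "card (PO \<sigma>1 \<sigma>2) \<le> 2 * (card X + 1)" if sg: "\<sigma>1 \<noteq> 0" "\<sigma>2 \<noteq> 0" for \<sigma>1 \<sigma>2
    proof -
      have inj: "inj_on fst (PO \<sigma>1 \<sigma>2)"
        by (rule inj_onI) (use sgenv_inj sg in \<open>auto simp: PO_def\<close>)
      have fPO: "finite (PO \<sigma>1 \<sigma>2)" using fP unfolding PO_def by simp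
      have "card (fst ` PO \<sigma>1 \<sigma>2) \<le> 2 * (card X + 1)"
      proof (rule count_lemma)
        show "finite (fst ` PO \<sigma>1 \<sigma>2)" using fPO by simp
        show "finite X" by fact
        show "fst ` PO \<sigma>1 \<sigma>2 \<inter> X = {}" unfolding PO_def by auto
        fix a b c assume a: "a \<in> fst ` PO \<sigma>1 \<sigma>2" and b: "b \<in> fst ` PO \<sigma>1 \<sigma>2" and c: "c \<in> fst ` PO \<sigma>1 \<sigma>2"
          and ab: "a < b" and bc: "b < c" and noX: "\<forall>x\<in>X. \<not> (a \<le> x \<and> x \<le> c)"
        obtain p where p: "p \<in> PO \<sigma>1 \<sigma>2" "a = fst p" using a by blast
        obtain q where q: "q \<in> PO \<sigma>1 \<sigma>2" "b = fst q" using b by blast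
        obtain r where r: "r \<in> PO \<sigma>1 \<sigma>2" "c = fst r" using c by blast
        obtain s1 s2 where s12: "s1 \<in> S1" "s2 \<in> S2" "s1 \<inter> s2 = {q}" using q unfolding PO_def P_def by blast
        show False
        proof (rule key[OF disj nv XX])
          show "\<forall>x\<in>X. \<not> (fst p \<le> x \<and> x \<le> fst r)" using noX p r by simp
          show "fst p < fst q" "fst q < fst r" using ab bc p q r by auto
          show "s1 \<in> S1" "s2 \<in> S2" "s1 \<inter> s2 = {q}" by fact+
          show "\<sigma>1 \<noteq> 0" "\<sigma>2 \<noteq> 0" by fact+
          show "sgenv \<sigma>1 S1 p" "sgenv \<sigma>1 S1 q" "sgenv \<sigma>1 S1 r" "sgenv \<sigma>2 S2 p" "sgenv \<sigma>2 S2 r"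
            using p q r unfolding PO_def by auto
        qed
      qed
      then show ?thesis using card_image[OF inj] by simp
    qed
    have env: "sgenv 1 S p \<or> sgenv (-1) S p" if "on_envelope S p" for S p
      using that lower_sgenv upper_sgenv unfolding on_envelope_def by blast
    have sub: "P \<subseteq> PE \<union> (PO 1 1 \<union> PO 1 (-1)) \<union> (PO (-1) 1 \<union> PO (-1) (-1))"
    proof
      fix p assume p: "p \<in> P"
      then have "sgenv 1 S1 p \<or> sgenv (-1) S1 p" "sgenv 1 S2 p \<or> sgenv (-1) S2 p"
        using env unfolding P_def by auto
      then show "p \<in> PE \<union> (PO 1 1 \<union> PO 1 (-1)) \<union> (PO (-1) 1 \<union> PO (-1) (-1))"
        using p unfolding PE_def PO_def by auto
    qed
    have fU: "finite (PE \<union> (PO 1 1 \<union> PO 1 (-1)) \<union> (PO (-1) 1 \<union> PO (-1) (-1)))"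
      using fP unfolding PE_def PO_def by auto
    have "card P \<le> card (PE \<union> (PO 1 1 \<union> PO 1 (-1)) \<union> (PO (-1) 1 \<union> PO (-1) (-1)))"
      by (rule card_mono[OF fU sub])
    also have "\<dots> \<le> card PE + (card (PO 1 1) + card (PO 1 (-1))) + (card (PO (-1) 1) + card (PO (-1) (-1)))"
    proof -
      have u: "card (A \<union> B) \<le> card A + card B" for A B :: "(real \<times> real) set" by (rule card_Un_le)
      show ?thesis using u[of PE "PO 1 1 \<union> PO 1 (-1) \<union> (PO (-1) 1 \<union> PO (-1) (-1))"]
          u[of "PO 1 1" "PO 1 (-1)"] u[of "PO (-1) 1" "PO (-1) (-1)"]
          u[of "PO 1 1 \<union> PO 1 (-1)" "PO (-1) 1 \<union> PO (-1) (-1)"]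
        by (simp add: Un_assoc)
    qed
    also have "\<dots> \<le> 2 * card X + 8 * (card X + 1)"
      using cPE cPO[of 1 1] cPO[of 1 "-1"] cPO[of "-1" 1] cPO[of "-1" "-1"] by simp
    also have "\<dots> \<le> 28 * n" using cX n1 by simp
    finally have "card P \<le> 28 * n" .
    then have "real (card P) \<le> 28 * real n" by (metis of_nat_le_iff of_nat_mult of_nat_numeral)
    then show ?thesis unfolding P_def n_def .
  qed
qed

end
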